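(* Let $\alpha=1$, $j\ne0$, and $$G(x)=p_0+p_1\cos(2\pi x)+q_1\sin(2\pi x),\qquad V(x)=v_0+v_1\cos(2\pi x)+w_1\sin(2\pi x),$$ with real coefficients, $p_0>0$, $p_1\ge0$. Then there is a unique $r\ge1$ with $$\left(1-\frac1r\right)\left((p_1+j^2r)^2+q_1^2\right)=v_1^2+w_1^2.$$ Define $$a_0=2r-1,\quad \overline{H}=\frac{j^2(2r-1)}{2}+v_0-p_0,\quad a_1=-\frac{2r\big(v_1(p_1+j^2r)+w_1q_1\big)}{(p_1+j^2r)^2+q_1^2},\quad b_1=-\frac{2r\big(w_1(p_1+j^2r)-v_1q_1\big)}{(p_1+j^2r)^2+q_1^2}.$$ Then, with $m(x)=\dfrac{1}{a_0+a_1\cos(2\pi x)+b_1\sin(2\pi x)}$, the pair $(m,\overline{H})$ is the unique solution of problem (P) (with $\alpha=1$).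
   Context: $\mathbb{T}=\mathbb{R}/\mathbb{Z}$. Problem (P): given $0<\alpha\le2$, $j\ne0$, $V,G\in C^2(\mathbb{T})$, find $(m,\overline{H})\in C(\mathbb{T})\times\mathbb{R}$ with $m>0$ on $\mathbb{T}$, $\int_{\mathbb{T}}m=1$, and $\frac{j^2}{2m(x)^\alpha}+V(x)=\int_{\mathbb{T}}G(x-y)m(y)\,dy+\overline{H}$ for all $x\in\mathbb{T}$. *)

theory Defs
  imports "HOL-Analysis.Analysis"
begin

text \<open>Functions on the torus T = R/Z are represented as 1-periodic functions on the reals.\<close>

definition periodic1 :: "(real \<Rightarrow> real) \<Rightarrow> bool" where
  "periodic1 f \<longleftrightarrow> (\<forall>x. f (x + 1) = f x)"

text \<open>(m, Hbar) solves problem (P) with data alpha, j, V, G.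
  Integration over T is integration over the period [0,1].\<close>

definition solves_P ::
  "real \<Rightarrow> real \<Rightarrow> (real \<Rightarrow> real) \<Rightarrow> (real \<Rightarrow> real) \<Rightarrow> (real \<Rightarrow> real) \<Rightarrow> real \<Rightarrow> bool" where
  "solves_P \<alpha> j V G m H \<longleftrightarrow>
     continuous_on UNIV m \<and> periodic1 m \<and> (\<forall>x. m x > 0) \<and>
     integral {0..1} m = 1 \<and>
     (\<forall>x. j\<^sup>2 / (2 * m x powr \<alpha>) + V x = integral {0..1} (\<lambda>y. G (x - y) * m y) + H)"

end

theory Submission
  imports Defs
begin

lemma sq_ident: "((b::real)* cos t + c* sin t)^2 + (b* sin t - c* cos t)^2 = b^2 + c^2"
  using sin_cos_squared_add[of t] by algebra

lemma abs_lt: fixes u a :: real assumes "u^2 \<le> a^2 - 1" "a > 0" shows "\<bar>u\<bar> < a"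
proof -
  have "u^2 < a^2" using assms by linarith
  then have "\<bar>u\<bar>^2 < a^2" by simp
  then show ?thesis using assms power_less_imp_less_base[of "\<bar>u\<bar>" 2 a] by simp
qed

lemma inv_aux: fixes D N :: real assumes "D \<noteq> 0" shows "inverse (1 + (N/D)^2) = D^2/(D^2+N^2)"
proof -
  have p: "D^2 + N^2 > 0" using assms by (simp add: add_pos_nonneg)
  have "1 + (N/D)^2 = (D^2+N^2)/D^2" using assms by (simp add: field_simps power2_eq_square)
  then show ?thesis using p by simp
qed

lemma alg_aux: fixes A B D P :: real assumes "D \<noteq> 0" "A > 0" "B > 0" "P > 0"
  shows "1 - D^2/(2*A*B) * (2*P*(A*(B-1))/D^2)/P = 1/B"
  using assms by (simp add: field_simps)

lemma antideriv:
  fixes a b c x :: real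
  assumes h: "a*a - b*b - c*c = 1" and a: "a > 0"
  shows "((\<lambda>x. x - arctan ((b* sin(2*pi*x) - c* cos(2*pi*x)) / (a + 1 + b* cos(2*pi*x) + c* sin(2*pi*x))) / pi)
     has_real_derivative (1 / (a + b* cos(2*pi*x) + c* sin(2*pi*x)))) (at x)"
proof -
  define t where "t = 2*pi*x"
  define L0 where "L0 = b* cos t + c* sin t"
  define N where "N = b* sin t - c* cos t"
  have id: "L0^2 + N^2 = a^2 - 1" using sq_ident[of b t c] h unfolding L0_def N_def
    by (simp add: power2_eq_square)
  have "L0^2 \<le> a^2 - 1" using id zero_le_power2[of N] by linarith
  then have "\<bar>L0\<bar> < a" using abs_lt a by blast
  then have Lp: "a + L0 > 0" and Dp: "a + 1 + L0 > 0" by auto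
  have dd: "((\<lambda>x. x - arctan ((b* sin(2*pi*x) - c* cos(2*pi*x)) / (a + 1 + b* cos(2*pi*x) + c* sin(2*pi*x))) / pi)
     has_real_derivative
      (1 - inverse (1 + (N / (a+1+L0))^2) *
        (((b * (cos t * (2*pi)) + c * (sin t * (2*pi))) * (a+1+L0) -
          N * (b * (- sin t * (2*pi)) + c * (cos t * (2*pi)))) / (a+1+L0)^2) / pi)) (at x)"
    unfolding t_def N_def L0_def
    using Dp unfolding t_def L0_def
    by (auto intro!: derivative_eq_intros simp: power2_eq_square add.assoc mult_ac)
  have "(1 - inverse (1 + (N / (a+1+L0))^2) *
        (((b * (cos t * (2*pi)) + c * (sin t * (2*pi))) * (a+1+L0) -
          N * (b * (- sin t * (2*pi)) + c * (cos t * (2*pi)))) / (a+1+L0)^2) / pi)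
      = 1 / (a + L0)"
  proof -
    have e1: "(b * (cos t * (2*pi)) + c * (sin t * (2*pi))) * (a+1+L0) -
          N * (b * (- sin t * (2*pi)) + c * (cos t * (2*pi))) = 2*pi*(L0*(a+1+L0) + N^2)"
      unfolding N_def L0_def by (simp add: algebra_simps power2_eq_square)
    have e2: "L0*(a+1+L0) + N^2 = (a+1)*(a + L0 - 1)" using id by (simp add: algebra_simps power2_eq_square)
    have e3: "(a+1+L0)^2 + N^2 = 2*(a+1)*(a+L0)" using id by (simp add: algebra_simps power2_eq_square)
    have e4: "inverse (1 + (N / (a+1+L0))^2) = (a+1+L0)^2 / ((a+1+L0)^2 + N^2)"
      using Dp inv_aux by simp
    have pi: "pi > 0" by simp
    show ?thesis unfolding e1 e4 e3 e2 using Dp Lp a pi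
      by (intro alg_aux) auto
  qed
  with dd show ?thesis unfolding t_def L0_def add.assoc by simp
qed

lemma L_pos:
  fixes a b c x :: real
  assumes h: "a*a - b*b - c*c = 1" and a: "a > 0"
  shows "a + b * cos(2*pi*x) + c * sin(2*pi*x) > 0"
proof -
  define t where "t = 2*pi*x"
  define L0 where "L0 = b * cos t + c * sin t"
  define N where "N = b * sin t - c * cos t"
  have id: "L0^2 + N^2 = a^2 - 1" using sq_ident[of b t c] h unfolding L0_def N_def
    by (simp add: power2_eq_square)
  have "L0^2 \<le> a^2 - 1" using id zero_le_power2[of N] by linarith
  then have "\<bar>L0\<bar> < a" using abs_lt a by blast
  then show ?thesis unfolding L0_def t_def by (simp add: add.assoc)
qed

lemma int_one:
  fixes a b c :: real
  assumes h: "a*a - b*b - c*c = 1" and a: "a > 0"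
  shows "((\<lambda>x. 1 / (a + b * cos(2*pi*x) + c * sin(2*pi*x))) has_integral 1) {0..1}"
proof -
  have "((\<lambda>x. 1 / (a + b * cos(2*pi*x) + c * sin(2*pi*x))) has_integral
     (\<lambda>x. x - arctan ((b * sin(2*pi*x) - c * cos(2*pi*x)) / (a + 1 + b * cos(2*pi*x) + c * sin(2*pi*x))) / pi) 1
     - (\<lambda>x. x - arctan ((b * sin(2*pi*x) - c * cos(2*pi*x)) / (a + 1 + b * cos(2*pi*x) + c * sin(2*pi*x))) / pi) 0) {0..1}"
    apply (rule fundamental_theorem_of_calculus)
     apply simp
    apply (rule has_vector_derivative_at_within)
    apply (subst has_real_derivative_iff_has_vector_derivative[symmetric])
    apply (rule antideriv[OF h a])
    done
  then show ?thesis by simp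
qed

lemma int_log:
  fixes a b c :: real
  assumes h: "a*a - b*b - c*c = 1" and a: "a > 0"
  shows "((\<lambda>x. (c * cos(2*pi*x) - b * sin(2*pi*x)) / (a + b * cos(2*pi*x) + c * sin(2*pi*x))) has_integral 0) {0..1}"
proof -
  have d: "((\<lambda>x. ln (a + b * cos(2*pi*x) + c * sin(2*pi*x)) / (2*pi)) has_real_derivative
     (c * cos(2*pi*x) - b * sin(2*pi*x)) / (a + b * cos(2*pi*x) + c * sin(2*pi*x))) (at x)" for x
  proof -
    have p: "a + b * cos(2*pi*x) + c * sin(2*pi*x) > 0" using L_pos[OF h a] .
    have dL: "((\<lambda>x. a + b * cos(2*pi*x) + c * sin(2*pi*x)) has_real_derivative (2*pi*(c * cos(2*pi*x) - b * sin(2*pi*x)))) (at x)"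
      by (auto intro!: derivative_eq_intros simp: algebra_simps)
    have "((\<lambda>x. ln (a + b * cos(2*pi*x) + c * sin(2*pi*x)) / (2*pi)) has_real_derivative
       (1 / (a + b * cos(2*pi*x) + c * sin(2*pi*x)) * (2*pi*(c * cos(2*pi*x) - b * sin(2*pi*x)))) / (2*pi)) (at x)"
      by (rule DERIV_cdivide, rule DERIV_chain2[OF DERIV_ln_divide[OF p] dL])
    then show ?thesis by simp
  qed
  have "((\<lambda>x. (c * cos(2*pi*x) - b * sin(2*pi*x)) / (a + b * cos(2*pi*x) + c * sin(2*pi*x))) has_integral
     (\<lambda>x. ln (a + b * cos(2*pi*x) + c * sin(2*pi*x)) / (2*pi)) 1
     - (\<lambda>x. ln (a + b * cos(2*pi*x) + c * sin(2*pi*x)) / (2*pi)) 0) {0..1}"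
    apply (rule fundamental_theorem_of_calculus)
     apply simp
    apply (rule has_vector_derivative_at_within)
    apply (subst has_real_derivative_iff_has_vector_derivative[symmetric])
    apply (rule d)
    done
  then show ?thesis by simp
qed

lemma aux3: assumes "(y::real) \<noteq> 0" "y - a = b*u + c * v" shows "1 - a*(1/y) = b*(u/y) + c*(v/y)"
proof -
  have "b*(u/y) + c*(v/y) = (b*u + c * v)/y" by (simp add: add_divide_distrib)
  also have "\<dots> = (y - a)/y" using assms(2) by simp
  also have "\<dots> = 1 - a*(1/y)" using assms(1) by (simp add: diff_divide_distrib)
  finally show ?thesis by simp
qed

lemma int_cos_sin:
  fixes a b c :: real
  assumes h: "a*a - b*b - c*c = 1" and a: "a > 0"
  shows "((\<lambda>x. cos(2*pi*x) / (a + b * cos(2*pi*x) + c * sin(2*pi*x))) has_integral (-b/(a+1))) {0..1}"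
    and "((\<lambda>x. sin(2*pi*x) / (a + b * cos(2*pi*x) + c * sin(2*pi*x))) has_integral (-c/(a+1))) {0..1}"
proof -
  define L where "L = (\<lambda>x. a + b * cos(2*pi*x) + c * sin(2*pi*x))"
  have Lp: "L x > 0" for x unfolding L_def using L_pos[OF h a] .
  have cL: "continuous_on {0..1} L" unfolding L_def by (intro continuous_intros)
  have ic: "(\<lambda>x. cos(2*pi*x) / L x) integrable_on {0..1}"
    by (rule integrable_continuous_real, intro continuous_intros cL) (metis Lp less_irrefl)
  have isi: "(\<lambda>x. sin(2*pi*x) / L x) integrable_on {0..1}"
    by (rule integrable_continuous_real, intro continuous_intros cL) (metis Lp less_irrefl)
  define Ic where "Ic = integral {0..1} (\<lambda>x. cos(2*pi*x) / L x)"
  define Is where "Is = integral {0..1} (\<lambda>x. sin(2*pi*x) / L x)"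
  have hc: "((\<lambda>x. cos(2*pi*x) / L x) has_integral Ic) {0..1}" using ic Ic_def by (simp add: has_integral_integral)
  have hs: "((\<lambda>x. sin(2*pi*x) / L x) has_integral Is) {0..1}" using isi Is_def by (simp add: has_integral_integral)
  have h1: "((\<lambda>x. 1 / L x) has_integral 1) {0..1}" unfolding L_def using int_one[OF h a] .
  have hl: "((\<lambda>x. (c * cos(2*pi*x) - b * sin(2*pi*x)) / L x) has_integral 0) {0..1}"
    unfolding L_def using int_log[OF h a] .
  have r1a: "((\<lambda>x. b * (cos(2*pi*x) / L x) + c * (sin(2*pi*x) / L x)) has_integral (b * Ic + c * Is)) {0..1}"
    by (intro has_integral_add has_integral_mult_right hc hs)
  have r1b: "((\<lambda>x. b * (cos(2*pi*x) / L x) + c * (sin(2*pi*x) / L x)) has_integral (1 - a * 1)) {0..1}"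
  proof -
    have "((\<lambda>x. 1 - a * (1 / L x)) has_integral (1 - a * 1)) {0..1}"
      by (intro has_integral_diff has_integral_mult_right h1) (use has_integral_const_real[of "1::real" 0 1] in simp)
    moreover have "1 - a * (1 / L x) = b * (cos(2*pi*x) / L x) + c * (sin(2*pi*x) / L x)" for x
      by (rule aux3) (use Lp[of x] in \<open>auto simp: L_def\<close>)
    ultimately show ?thesis by simp
  qed
  have r1: "b * Ic + c * Is = 1 - a" using has_integral_unique[OF r1a r1b] by simp
  have r2a: "((\<lambda>x. c * (cos(2*pi*x) / L x) - b * (sin(2*pi*x) / L x)) has_integral (c * Ic - b * Is)) {0..1}"
    by (intro has_integral_diff has_integral_mult_right hc hs)
  have r2b: "((\<lambda>x. c * (cos(2*pi*x) / L x) - b * (sin(2*pi*x) / L x)) has_integral 0) {0..1}"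
  proof -
    have "(c * cos(2*pi*x) - b * sin(2*pi*x)) / L x = c * (cos(2*pi*x) / L x) - b * (sin(2*pi*x) / L x)" for x
      by (simp add: diff_divide_distrib)
    then show ?thesis using hl by simp
  qed
  have r2: "c * Ic - b * Is = 0" using has_integral_unique[OF r2a r2b] .
  have "Ic = -b/(a+1) \<and> Is = -c/(a+1)"
  proof (cases "b = 0 \<and> c = 0")
    case True
    then have "a*a = 1" using h by simp
    then have "(a-1)*(a+1) = 0" by (simp add: algebra_simps)
    then have a1: "a = 1" using a by auto
    have fc: "((\<lambda>x. cos(2*pi*x)) has_integral (sin(2*pi*1)/(2*pi) - sin(2*pi*0)/(2*pi))) {0..1}"
      apply (rule fundamental_theorem_of_calculus[where f="\<lambda>x. sin(2*pi*x)/(2*pi)"])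
       apply simp
      apply (rule has_vector_derivative_at_within)
      apply (subst has_real_derivative_iff_has_vector_derivative[symmetric])
      apply (auto intro!: derivative_eq_intros)
      done
    have fs: "((\<lambda>x. sin(2*pi*x)) has_integral (-cos(2*pi*1)/(2*pi) - (-cos(2*pi*0)/(2*pi)))) {0..1}"
      apply (rule fundamental_theorem_of_calculus[where f="\<lambda>x. -cos(2*pi*x)/(2*pi)"])
       apply simp
      apply (rule has_vector_derivative_at_within)
      apply (subst has_real_derivative_iff_has_vector_derivative[symmetric])
      apply (auto intro!: derivative_eq_intros)
      done
    have "L = (\<lambda>x. 1)" unfolding L_def using True a1 by simp
    then have "Ic = 0" "Is = 0" using has_integral_unique[OF hc] has_integral_unique[OF hs] fc fs by auto
    then show ?thesis using True by simp
  next
    case False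
    then have bc: "b*b + c*c > 0" by (simp add: sum_squares_gt_zero_iff)
    have e1: "(b*b+c*c)*Ic = b*(1-a)"
    proof -
      have "(b*b+c*c)*Ic = b*(b * Ic + c * Is) + c*(c * Ic - b * Is)" by (simp add: algebra_simps)
      then show ?thesis using r1 r2 by simp
    qed
    have e2: "(b*b+c*c)*Is = c*(1-a)"
    proof -
      have "(b*b+c*c)*Is = c*(b * Ic + c * Is) - b*(c * Ic - b * Is)" by (simp add: algebra_simps)
      then show ?thesis using r1 r2 by simp
    qed
    have bb: "b*b+c*c = (a-1)*(a+1)" using h by (simp add: algebra_simps)
    have am: "a - 1 \<noteq> 0" using bc bb by auto
    have ap: "a + 1 > 0" using a by simp
    have nz: "(a-1)*(a+1) \<noteq> 0" using am ap by simp
    have "Ic = b*(1-a)/((a-1)*(a+1))" using e1 bc bb by (simp add: field_simps)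
    also have "\<dots> = -b/(a+1)" using nz ap by (subst frac_eq_eq) (auto simp: algebra_simps)
    finally have i1: "Ic = -b/(a+1)" .
    have "Is = c*(1-a)/((a-1)*(a+1))" using e2 bc bb by (simp add: field_simps)
    also have "\<dots> = -c/(a+1)" using nz ap by (subst frac_eq_eq) (auto simp: algebra_simps)
    finally have i2: "Is = -c/(a+1)" .
    show ?thesis using i1 i2 by simp
  qed
  then show "((\<lambda>x. cos(2*pi*x) / (a + b * cos(2*pi*x) + c * sin(2*pi*x))) has_integral (-b/(a+1))) {0..1}"
    and "((\<lambda>x. sin(2*pi*x) / (a + b * cos(2*pi*x) + c * sin(2*pi*x))) has_integral (-c/(a+1))) {0..1}"
    using hc hs unfolding L_def by auto
qed

lemma lin:
  fixes m :: "real \<Rightarrow> real"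
  assumes h0: "(m has_integral I0) {0..1}"
    and hc: "((\<lambda>y. cos(2*pi*y) * m y) has_integral C) {0..1}"
    and hs: "((\<lambda>y. sin(2*pi*y) * m y) has_integral S) {0..1}"
  shows "((\<lambda>y. (K + P * cos(2*pi*y) + Q * sin(2*pi*y)) * m y) has_integral (K*I0 + P*C + Q*S)) {0..1}"
proof -
  have "((\<lambda>y. K * m y + P * (cos(2*pi*y) * m y) + Q * (sin(2*pi*y) * m y)) has_integral (K*I0 + P*C + Q*S)) {0..1}"
    by (rule has_integral_add[OF has_integral_add[OF has_integral_mult_right[OF h0] has_integral_mult_right[OF hc]] has_integral_mult_right[OF hs]])
  moreover have "(K + P * cos(2*pi*y) + Q * sin(2*pi*y)) * m y = K * m y + P * (cos(2*pi*y) * m y) + Q * (sin(2*pi*y) * m y)" for y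
    by (simp add: algebra_simps)
  ultimately show ?thesis by simp
qed

lemma conv:
  fixes m :: "real \<Rightarrow> real"
  assumes h0: "(m has_integral I0) {0..1}"
    and hc: "((\<lambda>y. cos(2*pi*y) * m y) has_integral C) {0..1}"
    and hs: "((\<lambda>y. sin(2*pi*y) * m y) has_integral S) {0..1}"
  shows "((\<lambda>y. (p0 + p1 * cos(2*pi*(x-y)) + q1 * sin(2*pi*(x-y))) * m y) has_integral
     (p0*I0 + (p1 * cos(2*pi*x) + q1 * sin(2*pi*x))*C + (p1 * sin(2*pi*x) - q1 * cos(2*pi*x))*S)) {0..1}"
proof -
  have e: "(p0 + p1 * cos(2*pi*(x-y)) + q1 * sin(2*pi*(x-y))) =
     p0 + (p1 * cos(2*pi*x) + q1 * sin(2*pi*x)) * cos(2*pi*y) + (p1 * sin(2*pi*x) - q1 * cos(2*pi*x)) * sin(2*pi*y)" for y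
  proof -
    have "2*pi*(x-y) = 2*pi*x - 2*pi*y" by (simp add: algebra_simps)
    then show ?thesis by (simp add: cos_diff sin_diff algebra_simps)
  qed
  show ?thesis unfolding e by (rule lin[OF h0 hc hs])
qed

lemma per_nat: "periodic1 f \<Longrightarrow> f (y + real n) = f y"
proof (induction n)
  case 0 then show ?case by simp
next
  case (Suc n)
  have "y + real (Suc n) = (y + real n) + 1" by simp
  then have "f (y + real (Suc n)) = f ((y + real n) + 1)" by (rule arg_cong[where f=f])
  also have "\<dots> = f (y + real n)" using Suc.prems unfolding periodic1_def by blast
  finally show ?case using Suc by simp
qed

lemma per_frac: assumes "periodic1 f" shows "f x = f (frac x)"
proof -
  obtain k where k: "k = \<lfloor>x\<rfloor>" by simp
  have fx: "frac x = x - of_int k" unfolding frac_def k by simp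
  show ?thesis
  proof (cases "k \<ge> 0")
    case True
    then obtain n where "k = int n" by (metis nonneg_int_cases)
    then have "x = frac x + real n" using fx by simp
    then show ?thesis using per_nat[OF assms, of "frac x" n] by simp
  next
    case False
    then obtain n where "k = - int n" using False by (intro that[of "nat (-k)"]) simp
    then have "frac x = x + real n" using fx by simp
    then show ?thesis using per_nat[OF assms, of x n] by simp
  qed
qed

lemma sol_form:
  fixes j p0 p1 q1 v0 v1 w1 H :: real and m :: "real \<Rightarrow> real"
  assumes s: "solves_P 1 j (\<lambda>x. v0 + v1 * cos (2 * pi * x) + w1 * sin (2 * pi * x))
                 (\<lambda>x. p0 + p1 * cos (2 * pi * x) + q1 * sin (2 * pi * x)) m H"
  shows "continuous_on UNIV m" "periodic1 m" "\<And>x. m x > 0" "(m has_integral 1) {0..1}"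
    "((\<lambda>y. cos(2*pi*y) * m y) has_integral integral {0..1} (\<lambda>y. cos(2*pi*y) * m y)) {0..1}"
    "((\<lambda>y. sin(2*pi*y) * m y) has_integral integral {0..1} (\<lambda>y. sin(2*pi*y) * m y)) {0..1}"
    "\<And>x. j\<^sup>2 / (2 * m x) = (p0 + H - v0)
        + (p1 * integral {0..1} (\<lambda>y. cos(2*pi*y) * m y) - q1 * integral {0..1} (\<lambda>y. sin(2*pi*y) * m y) - v1) * cos(2*pi*x)
        + (q1 * integral {0..1} (\<lambda>y. cos(2*pi*y) * m y) + p1 * integral {0..1} (\<lambda>y. sin(2*pi*y) * m y) - w1) * sin(2*pi*x)"
proof -
  show c: "continuous_on UNIV m" and "periodic1 m" and pos: "\<And>x. m x > 0"
    using s by (auto simp: solves_P_def)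
  have i1: "integral {0..1} m = 1" using s by (simp add: solves_P_def)
  have cm: "continuous_on {0..1} m" using c by (rule continuous_on_subset) simp
  have "m integrable_on {0..1}" by (rule integrable_continuous_real[OF cm])
  then show h0: "(m has_integral 1) {0..1}" using i1 by (metis has_integral_integral)
  have "(\<lambda>y. cos(2*pi*y) * m y) integrable_on {0..1}"
    by (rule integrable_continuous_real) (intro continuous_intros cm)
  then show hc: "((\<lambda>y. cos(2*pi*y) * m y) has_integral integral {0..1} (\<lambda>y. cos(2*pi*y) * m y)) {0..1}"
    by (simp add: has_integral_integral)
  have "(\<lambda>y. sin(2*pi*y) * m y) integrable_on {0..1}"
    by (rule integrable_continuous_real) (intro continuous_intros cm)
  then show hs: "((\<lambda>y. sin(2*pi*y) * m y) has_integral integral {0..1} (\<lambda>y. sin(2*pi*y) * m y)) {0..1}"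
    by (simp add: has_integral_integral)
  fix x
  define C where "C = integral {0..1} (\<lambda>y. cos(2*pi*y) * m y)"
  define S where "S = integral {0..1} (\<lambda>y. sin(2*pi*y) * m y)"
  have eq: "j\<^sup>2 / (2 * m x powr 1) + (v0 + v1 * cos (2 * pi * x) + w1 * sin (2 * pi * x))
      = integral {0..1} (\<lambda>y. (p0 + p1 * cos(2*pi*(x-y)) + q1 * sin(2*pi*(x-y))) * m y) + H"
    using s by (simp add: solves_P_def)
  have I: "integral {0..1} (\<lambda>y. (p0 + p1 * cos(2*pi*(x-y)) + q1 * sin(2*pi*(x-y))) * m y)
     = p0*1 + (p1 * cos(2*pi*x) + q1 * sin(2*pi*x))*C + (p1 * sin(2*pi*x) - q1 * cos(2*pi*x))*S"
    using conv[OF h0 hc hs, of p0 p1 x q1] unfolding C_def S_def by (rule integral_unique)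
  have pw: "m x powr 1 = m x" using pos[of x] by simp
  from eq[unfolded I pw] show "j\<^sup>2 / (2 * m x) = (p0 + H - v0)
        + (p1 * integral {0..1} (\<lambda>y. cos(2*pi*y) * m y) - q1 * integral {0..1} (\<lambda>y. sin(2*pi*y) * m y) - v1) * cos(2*pi*x)
        + (q1 * integral {0..1} (\<lambda>y. cos(2*pi*y) * m y) + p1 * integral {0..1} (\<lambda>y. sin(2*pi*y) * m y) - w1) * sin(2*pi*x)"
    unfolding C_def[symmetric] S_def[symmetric] by (simp add: algebra_simps)
qed

lemma recip_sign: fixes u v :: real assumes "u > 0" "v > 0" shows "(1/u - 1/v) * (u - v) \<le> 0"
proof (cases "u \<le> v")
  case True
  then have "1/v \<le> 1/u" using assms by (simp add: divide_right_mono_neg frac_le)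
  then show ?thesis using True by (simp add: mult_nonpos_nonneg mult_le_0_iff)
next
  case False
  then have "1/u \<le> 1/v" using assms by (simp add: frac_le)
  then show ?thesis using False by (simp add: mult_le_0_iff)
qed

lemma recip_aux: fixes J u v :: real assumes "u \<noteq> 0" "v \<noteq> 0"
  shows "(J/(2*u) - J/(2 * v))*(u-v) = (J/2)*((1/u - 1/v)*(u - v))"
  using assms by (simp add: field_simps)

lemma uniq:
  fixes j p0 p1 q1 v0 v1 w1 H1 H2 :: real and m1 m2 :: "real \<Rightarrow> real"
  assumes j: "j \<noteq> 0" and p1: "p1 \<ge> 0"
  and s1: "solves_P 1 j (\<lambda>x. v0 + v1 * cos (2 * pi * x) + w1 * sin (2 * pi * x))
                 (\<lambda>x. p0 + p1 * cos (2 * pi * x) + q1 * sin (2 * pi * x)) m1 H1"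
  and s2: "solves_P 1 j (\<lambda>x. v0 + v1 * cos (2 * pi * x) + w1 * sin (2 * pi * x))
                 (\<lambda>x. p0 + p1 * cos (2 * pi * x) + q1 * sin (2 * pi * x)) m2 H2"
  shows "m1 = m2 \<and> H1 = H2"
proof -
  define C1 where "C1 = integral {0..1} (\<lambda>y. cos(2*pi*y) * m1 y)"
  define S1 where "S1 = integral {0..1} (\<lambda>y. sin(2*pi*y) * m1 y)"
  define C2 where "C2 = integral {0..1} (\<lambda>y. cos(2*pi*y) * m2 y)"
  define S2 where "S2 = integral {0..1} (\<lambda>y. sin(2*pi*y) * m2 y)"
  note f1 = sol_form[OF s1, folded C1_def S1_def]
  note f2 = sol_form[OF s2, folded C2_def S2_def]
  define dK where "dK = (p0 + H1 - v0) - (p0 + H2 - v0)"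
  define dA where "dA = (p1 * C1 - q1 * S1 - v1) - (p1 * C2 - q1 * S2 - v1)"
  define dB where "dB = (q1 * C1 + p1 * S1 - w1) - (q1 * C2 + p1 * S2 - w1)"
  define phi where "phi = (\<lambda>x. (dK + dA * cos(2*pi*x) + dB * sin(2*pi*x)) * (m1 x - m2 x))"
  have d0: "((\<lambda>y. m1 y - m2 y) has_integral 1 - 1) {0..1}" by (rule has_integral_diff[OF f1(4) f2(4)])
  have dc: "((\<lambda>y. cos(2*pi*y) * (m1 y - m2 y)) has_integral C1 - C2) {0..1}"
    using has_integral_diff[OF f1(5) f2(5)] by (simp add: right_diff_distrib)
  have ds: "((\<lambda>y. sin(2*pi*y) * (m1 y - m2 y)) has_integral S1 - S2) {0..1}"
    using has_integral_diff[OF f1(6) f2(6)] by (simp add: right_diff_distrib)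
  define P where "P = p1 * ((C1 - C2)^2 + (S1 - S2)^2)"
  have P0: "P \<ge> 0" unfolding P_def using p1 by simp
  have hphi: "(phi has_integral P) {0..1}"
  proof -
    have "(phi has_integral (dK*(1-1) + dA*(C1-C2) + dB*(S1-S2))) {0..1}"
      unfolding phi_def by (rule lin[OF d0 dc ds])
    moreover have "dK*(1-1) + dA*(C1-C2) + dB*(S1-S2) = P"
      unfolding dA_def dB_def P_def by (simp add: algebra_simps power2_eq_square)
    ultimately show ?thesis by simp
  qed
  have phix: "phi x = (j\<^sup>2/2) * ((1 / m1 x - 1 / m2 x) * (m1 x - m2 x))" for x
  proof -
    have "phi x = (j\<^sup>2 / (2 * m1 x) - j\<^sup>2 / (2 * m2 x)) * (m1 x - m2 x)"
      unfolding phi_def f1(7)[of x] f2(7)[of x] dK_def dA_def dB_def by (simp add: algebra_simps)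
    then show ?thesis using recip_aux[of "m1 x" "m2 x" "j\<^sup>2"] f1(3)[of x] f2(3)[of x] by simp
  qed
  have phin: "phi x \<le> 0" for x
    unfolding phix using recip_sign[OF f1(3)[of x] f2(3)[of x]] by (simp add: mult_nonneg_nonpos)
  have cphi: "continuous_on {0..1} phi"
  proof -
    have "continuous_on {0..1} m1" "continuous_on {0..1} m2"
      using f1(1) f2(1) by (auto intro: continuous_on_subset)
    then show ?thesis unfolding phi_def by (intro continuous_intros)
  qed
  have "0 \<le> -P"
    using has_integral_nonneg[OF has_integral_neg[OF hphi]] phin by (simp add: neg_le_0_iff_le)
  then have "P = 0" using P0 by simp
  then have hpsi: "((\<lambda>x. - phi x) has_integral 0) (cbox 0 1)"
    using has_integral_neg[OF hphi] by simp
  have z: "- phi x = 0" if "x \<in> {0..1}" for x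
    apply (rule has_integral_0_cbox_imp_0[OF _ _ hpsi])
    using cphi that phin by (auto intro: continuous_intros)
  have eq01: "m1 x = m2 x" if "x \<in> {0..1}" for x
  proof -
    have "phi x = 0" using z[OF that] by simp
    then have "(1 / m1 x - 1 / m2 x) * (m1 x - m2 x) = 0" using j unfolding phix by simp
    then show ?thesis using f1(3)[of x] f2(3)[of x] by auto
  qed
  have meq: "m1 = m2"
  proof
    fix x
    have "m1 x = m1 (frac x)" by (rule per_frac[OF f1(2)])
    also have "\<dots> = m2 (frac x)" by (rule eq01) (simp add: frac_ge_0 frac_lt_1 less_imp_le)
    also have "\<dots> = m2 x" by (rule per_frac[OF f2(2), symmetric])
    finally show "m1 x = m2 x" .
  qed
  have "H1 = H2" using f1(7)[of 0] f2(7)[of 0] unfolding meq C1_def C2_def S1_def S2_def by simp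
  with meq show ?thesis by simp
qed

lemma exist:
  fixes j p0 p1 q1 v0 v1 w1 r a1 b1 D :: real
  assumes j: "j \<noteq> 0" and p1: "p1 \<ge> 0" and r: "r \<ge> 1"
    and req: "(1 - 1 / r) * ((p1 + j\<^sup>2 * r)\<^sup>2 + q1\<^sup>2) = v1\<^sup>2 + w1\<^sup>2"
    and D: "D = (p1 + j\<^sup>2 * r)\<^sup>2 + q1\<^sup>2"
    and a1: "a1 = - (2 * r * (v1 * (p1 + j\<^sup>2 * r) + w1 * q1)) / D"
    and b1: "b1 = - (2 * r * (w1 * (p1 + j\<^sup>2 * r) - v1 * q1)) / D"
  shows "solves_P 1 j (\<lambda>x. v0 + v1 * cos (2 * pi * x) + w1 * sin (2 * pi * x))
                 (\<lambda>x. p0 + p1 * cos (2 * pi * x) + q1 * sin (2 * pi * x))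
                 (\<lambda>x. 1 / ((2 * r - 1) + a1 * cos (2 * pi * x) + b1 * sin (2 * pi * x)))
                 (j\<^sup>2 * (2 * r - 1) / 2 + v0 - p0)"
proof -
  define A where "A = p1 + j\<^sup>2 * r"
  have jp: "j\<^sup>2 > 0" using j by simp
  have Ap: "A > 0" unfolding A_def using jp r p1 by (simp add: add_nonneg_pos)
  have DA: "D = A\<^sup>2 + q1\<^sup>2" unfolding D A_def ..
  have Dp: "D > 0" unfolding DA using Ap by (simp add: add_pos_nonneg)
  define X where "X = v1 * A + w1 * q1"
  define Y where "Y = w1 * A - v1 * q1"
  have a1X: "a1 = -(2*r*X)/D" unfolding a1 X_def A_def ..
  have b1Y: "b1 = -(2*r*Y)/D" unfolding b1 Y_def A_def ..
  have XY: "X^2 + Y^2 = (v1\<^sup>2 + w1\<^sup>2) * D" unfolding X_def Y_def DA by (simp add: algebra_simps power2_eq_square)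
  have req': "v1\<^sup>2 + w1\<^sup>2 = (1 - 1/r) * D" using req unfolding D by simp
  have "a1*a1 + b1*b1 = (4*r^2) * (X^2 + Y^2) / D^2" unfolding a1X b1Y using Dp
    by (simp add: field_simps power2_eq_square)
  also have "\<dots> = (4*r^2) * (1 - 1/r)" unfolding XY req' using Dp by (simp add: power2_eq_square)
  also have "\<dots> = 4*r*r - 4*r" using r by (simp add: field_simps power2_eq_square)
  finally have sq: "a1*a1 + b1*b1 = 4*r*r - 4*r" .
  have h: "(2*r-1)*(2*r-1) - a1*a1 - b1*b1 = 1" using sq by (simp add: algebra_simps)
  have a0: "2*r - 1 > 0" using r by simp
  define L where "L = (\<lambda>x. (2 * r - 1) + a1 * cos (2 * pi * x) + b1 * sin (2 * pi * x))"
  have Lp: "L x > 0" for x unfolding L_def by (rule L_pos[OF h a0])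
  have h0: "((\<lambda>x. 1 / L x) has_integral 1) {0..1}" unfolding L_def by (rule int_one[OF h a0])
  have hc: "((\<lambda>y. cos(2*pi*y) * (1 / L y)) has_integral (-a1/(2*r))) {0..1}"
    using int_cos_sin(1)[OF h a0] unfolding L_def by simp
  have hs: "((\<lambda>y. sin(2*pi*y) * (1 / L y)) has_integral (-b1/(2*r))) {0..1}"
    using int_cos_sin(2)[OF h a0] unfolding L_def by simp
  have e1: "A*a1 - q1*b1 = -2*r * v1"
  proof -
    have "A*X - q1*Y = v1 * D" unfolding X_def Y_def DA by (simp add: algebra_simps power2_eq_square)
    moreover have "A*a1 - q1*b1 = -2*r*(A*X - q1*Y)/D" unfolding a1X b1Y using Dp by (simp add: field_simps)
    ultimately show ?thesis using Dp by simp
  qed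
  have e2: "A*b1 + q1*a1 = -2*r* w1"
  proof -
    have "A*Y + q1*X = w1 * D" unfolding X_def Y_def DA by (simp add: algebra_simps power2_eq_square)
    moreover have "A*b1 + q1*a1 = -2*r*(A*Y + q1*X)/D" unfolding a1X b1Y using Dp by (simp add: field_simps)
    ultimately show ?thesis using Dp by simp
  qed
  have c1: "j\<^sup>2 * a1 / 2 + v1 = -(p1*a1 - q1*b1)/(2*r)"
    using e1 r unfolding A_def by (simp add: field_simps)
  have c2: "j\<^sup>2 * b1 / 2 + w1 = -(q1*a1 + p1*b1)/(2*r)"
    using e2 r unfolding A_def by (simp add: field_simps)
  have mL: "(\<lambda>x. 1 / ((2 * r - 1) + a1 * cos (2 * pi * x) + b1 * sin (2 * pi * x))) = (\<lambda>x. 1 / L x)"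
    unfolding L_def ..
  show ?thesis
    unfolding mL solves_P_def
  proof (intro conjI allI)
    show "continuous_on UNIV (\<lambda>x. 1 / L x)"
      unfolding L_def by (intro continuous_intros) (use Lp in \<open>auto simp: L_def dest: less_imp_neq[symmetric]\<close>)
    show "periodic1 (\<lambda>x. 1 / L x)" unfolding periodic1_def L_def
    proof
      fix x
      have "2*pi*(x+1) = 2*pi*x + 2*pi" by (simp add: algebra_simps)
      then show "1 / (2 * r - 1 + a1 * cos (2 * pi * (x + 1)) + b1 * sin (2 * pi * (x + 1))) =
         1 / (2 * r - 1 + a1 * cos (2 * pi * x) + b1 * sin (2 * pi * x))" by simp
    qed
    show "0 < 1 / L x" for x using Lp[of x] by simp
    show "integral {0..1} (\<lambda>x. 1 / L x) = 1" using h0 by (rule integral_unique)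
    fix x
    have I: "integral {0..1} (\<lambda>y. (p0 + p1 * cos (2 * pi * (x - y)) + q1 * sin (2 * pi * (x - y))) * (1 / L y))
       = p0*1 + (p1 * cos(2*pi*x) + q1 * sin(2*pi*x))*(-a1/(2*r)) + (p1 * sin(2*pi*x) - q1 * cos(2*pi*x))*(-b1/(2*r))"
      by (rule integral_unique[OF conv[OF h0 hc hs]])
    have pw: "(1 / L x) powr 1 = 1 / L x" using Lp[of x] by simp
    have lhs: "j\<^sup>2 / (2 * (1 / L x)) + (v0 + v1 * cos (2 * pi * x) + w1 * sin (2 * pi * x))
        = (j\<^sup>2 * (2*r-1)/2 + v0) + (j\<^sup>2 * a1 / 2 + v1) * cos (2 * pi * x) + (j\<^sup>2 * b1 / 2 + w1) * sin (2 * pi * x)"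
      using Lp[of x] unfolding L_def by (simp add: field_simps)
    show "j\<^sup>2 / (2 * (1 / L x) powr 1) + (v0 + v1 * cos (2 * pi * x) + w1 * sin (2 * pi * x)) =
         integral {0..1} (\<lambda>y. (p0 + p1 * cos (2 * pi * (x - y)) + q1 * sin (2 * pi * (x - y))) * (1 / L y)) +
         (j\<^sup>2 * (2 * r - 1) / 2 + v0 - p0)"
      unfolding pw I lhs c1 c2 using r by (simp add: field_simps)
  qed
qed

lemma r_eu:
  fixes j p1 q1 v1 w1 :: real
  assumes j: "j \<noteq> 0" and p1: "p1 \<ge> 0"
  shows "\<exists>!r::real. r \<ge> 1 \<and> (1 - 1 / r) * ((p1 + j\<^sup>2 * r)\<^sup>2 + q1\<^sup>2) = v1\<^sup>2 + w1\<^sup>2"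
proof -
  define f where "f = (\<lambda>r::real. (1 - 1 / r) * ((p1 + j\<^sup>2 * r)\<^sup>2 + q1\<^sup>2))"
  define K where "K = v1\<^sup>2 + w1\<^sup>2"
  have jp: "j\<^sup>2 > 0" using j by simp
  have Bp: "(p1 + j\<^sup>2 * r)\<^sup>2 + q1\<^sup>2 > 0" if "r \<ge> 1" for r
  proof -
    have "p1 + j\<^sup>2 * r > 0" using jp that p1 by (simp add: add_nonneg_pos)
    then show ?thesis by (simp add: add_pos_nonneg)
  qed
  have mono: "f r < f s" if rs: "1 \<le> r" "r < s" for r s
  proof -
    have u0: "0 \<le> 1 - 1/r" using rs by simp
    have "1/s < 1/r" using rs by (simp add: frac_less2)
    then have u1: "1 - 1/r < 1 - 1/s" by simp
    have nn: "0 \<le> p1 + j\<^sup>2 * r" using jp rs p1 by simp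
    have le: "p1 + j\<^sup>2 * r \<le> p1 + j\<^sup>2 * s" using jp rs by simp
    have "(p1 + j\<^sup>2 * r)\<^sup>2 \<le> (p1 + j\<^sup>2 * s)\<^sup>2" by (rule power_mono[OF le nn])
    then have b1: "(p1 + j\<^sup>2 * r)\<^sup>2 + q1\<^sup>2 \<le> (p1 + j\<^sup>2 * s)\<^sup>2 + q1\<^sup>2" by simp
    have "f r \<le> (1 - 1/r) * ((p1 + j\<^sup>2 * s)\<^sup>2 + q1\<^sup>2)" unfolding f_def by (rule mult_left_mono[OF b1 u0])
    also have "\<dots> < (1 - 1/s) * ((p1 + j\<^sup>2 * s)\<^sup>2 + q1\<^sup>2)"
      by (rule mult_strict_right_mono[OF u1 Bp]) (use rs in simp)
    finally show ?thesis unfolding f_def .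
  qed
  define R where "R = 2 + K / (j\<^sup>2)\<^sup>2"
  have K0: "K \<ge> 0" unfolding K_def by simp
  have R2: "R \<ge> 2" unfolding R_def using K0 by simp
  have f1: "f 1 \<le> K" unfolding f_def using K0 by simp
  have fR: "K \<le> f R"
  proof -
    have uR: "1/2 \<le> 1 - 1/R" using R2 by (simp add: field_simps)
    have "j\<^sup>2 * R \<le> p1 + j\<^sup>2 * R" using p1 by simp
    then have "(j\<^sup>2 * R)\<^sup>2 \<le> (p1 + j\<^sup>2 * R)\<^sup>2" by (rule power_mono) (use jp R2 in simp)
    moreover have "(j\<^sup>2)\<^sup>2 * (2 * R) \<le> (j\<^sup>2 * R)\<^sup>2"
    proof -
      have "2 * R \<le> R * R" using R2 by (simp add: mult_right_mono)
      then have "(j\<^sup>2)\<^sup>2 * (2 * R) \<le> (j\<^sup>2)\<^sup>2 * (R * R)" by (rule mult_left_mono) simp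
      then show ?thesis by (simp add: power2_eq_square algebra_simps)
    qed
    ultimately have B: "(j\<^sup>2)\<^sup>2 * (2 * R) \<le> (p1 + j\<^sup>2 * R)\<^sup>2 + q1\<^sup>2" by (smt (verit) zero_le_power2)
    have "K = (j\<^sup>2)\<^sup>2 * R - 2 * (j\<^sup>2)\<^sup>2" unfolding R_def using jp by (simp add: field_simps)
    also have "\<dots> \<le> (1/2) * ((j\<^sup>2)\<^sup>2 * (2 * R))" using jp by simp
    also have "\<dots> \<le> (1/2) * ((p1 + j\<^sup>2 * R)\<^sup>2 + q1\<^sup>2)" using B by simp
    also have "\<dots> \<le> (1 - 1/R) * ((p1 + j\<^sup>2 * R)\<^sup>2 + q1\<^sup>2)"
      by (rule mult_right_mono[OF uR]) simp
    finally show ?thesis unfolding f_def .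
  qed
  have cf: "continuous_on {1..R} f" unfolding f_def
    by (intro continuous_intros) auto
  obtain r where r: "r \<ge> 1" "r \<le> R" "f r = K" using IVT'[of f 1 K R, OF f1 fR _ cf] R2 by auto
  show ?thesis
  proof (rule ex1I[of _ r])
    show "r \<ge> 1 \<and> (1 - 1 / r) * ((p1 + j\<^sup>2 * r)\<^sup>2 + q1\<^sup>2) = v1\<^sup>2 + w1\<^sup>2"
      using r unfolding f_def K_def by simp
    fix s assume s: "s \<ge> 1 \<and> (1 - 1 / s) * ((p1 + j\<^sup>2 * s)\<^sup>2 + q1\<^sup>2) = v1\<^sup>2 + w1\<^sup>2"
    then have fs: "f s = K" unfolding f_def K_def by simp
    show "s = r"
    proof (rule linorder_cases[of s r])
      assume "s < r" then show ?thesis using mono[of s r] s fs r by simp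
    next
      assume "r < s" then show ?thesis using mono[of r s] s fs r by simp
    qed simp
  qed
qed


theorem theorem1p3:
  fixes j p0 p1 q1 v0 v1 w1 :: real
  assumes "j \<noteq> 0" and "p0 > 0" and "p1 \<ge> 0"
  shows "(\<exists>!r::real. r \<ge> 1 \<and> (1 - 1 / r) * ((p1 + j\<^sup>2 * r)\<^sup>2 + q1\<^sup>2) = v1\<^sup>2 + w1\<^sup>2)
    \<and> (\<forall>r::real. r \<ge> 1 \<and> (1 - 1 / r) * ((p1 + j\<^sup>2 * r)\<^sup>2 + q1\<^sup>2) = v1\<^sup>2 + w1\<^sup>2 \<longrightarrow>
        (let G = (\<lambda>x. p0 + p1 * cos (2 * pi * x) + q1 * sin (2 * pi * x));
             V = (\<lambda>x. v0 + v1 * cos (2 * pi * x) + w1 * sin (2 * pi * x));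
             D = (p1 + j\<^sup>2 * r)\<^sup>2 + q1\<^sup>2;
             a0 = 2 * r - 1;
             H = j\<^sup>2 * (2 * r - 1) / 2 + v0 - p0;
             a1 = - (2 * r * (v1 * (p1 + j\<^sup>2 * r) + w1 * q1)) / D;
             b1 = - (2 * r * (w1 * (p1 + j\<^sup>2 * r) - v1 * q1)) / D;
             m = (\<lambda>x. 1 / (a0 + a1 * cos (2 * pi * x) + b1 * sin (2 * pi * x)))
         in solves_P 1 j V G m H \<and>
            (\<forall>m' H'. solves_P 1 j V G m' H' \<longrightarrow> m' = m \<and> H' = H)))"
proof -
  have p1: "\<exists>!r::real. r \<ge> 1 \<and> (1 - 1 / r) * ((p1 + j\<^sup>2 * r)\<^sup>2 + q1\<^sup>2) = v1\<^sup>2 + w1\<^sup>2"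
    by (rule r_eu[OF assms(1) assms(3)])
  show ?thesis
  proof (intro conjI p1 allI impI)
    fix r assume hr: "r \<ge> 1 \<and> (1 - 1 / r) * ((p1 + j\<^sup>2 * r)\<^sup>2 + q1\<^sup>2) = v1\<^sup>2 + w1\<^sup>2"
    note ex = exist[OF assms(1) assms(3) conjunct1[OF hr] conjunct2[OF hr] refl refl refl, of v0 p0]
    show "let G = (\<lambda>x. p0 + p1 * cos (2 * pi * x) + q1 * sin (2 * pi * x));
             V = (\<lambda>x. v0 + v1 * cos (2 * pi * x) + w1 * sin (2 * pi * x));
             D = (p1 + j\<^sup>2 * r)\<^sup>2 + q1\<^sup>2;
             a0 = 2 * r - 1;
             H = j\<^sup>2 * (2 * r - 1) / 2 + v0 - p0;
             a1 = - (2 * r * (v1 * (p1 + j\<^sup>2 * r) + w1 * q1)) / D;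
             b1 = - (2 * r * (w1 * (p1 + j\<^sup>2 * r) - v1 * q1)) / D;
             m = (\<lambda>x. 1 / (a0 + a1 * cos (2 * pi * x) + b1 * sin (2 * pi * x)))
         in solves_P 1 j V G m H \<and>
            (\<forall>m' H'. solves_P 1 j V G m' H' \<longrightarrow> m' = m \<and> H' = H)"
      unfolding Let_def using ex uniq[OF assms(1) assms(3) _ ex] by blast
  qed
qed

end
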